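(* Let $h=\sqrt{\mathsf{min}(\mathsf{min}+4\mathsf{max})}-3\mathsf{min}$. When the characteristic functions range over $V_2$, the AMC-$h$ policy has a competitive ratio of $\frac{\mathsf{min}+\sqrt{\mathsf{min}(\mathsf{min}+4\mathsf{max})}}{2\mathsf{max}}$ for maximizing social welfare with respect to greedy players.
   Context: Players: a finite set $N=\{a_1,\dots,a_n\}$. A characteristic function is $v:2^N\to\mathbb{R}_{\ge 0}$ with $v(\emptyset)=0$. There are fixed, known constants $0<\mathsf{min}\le\mathsf{max}$ and every $v$ considered is monotone and bounded: $\mathsf{min}\le v(S)\le v(T)\le\mathsf{max}$ for all nonempty $S\subseteq T\subseteq N$. $V_2$ denotes the set of such $v$ with $2\mathsf{min}\le\mathsf{max}<3\mathsf{min}$. A coalition structure is a partition $C$ of $N$; its social welfare is $\mathsf{SW}(C\mid v)=\sum_{S\in C}v(S)$. Online process: an arrival order is a permutation $\pi=(\pi_1,\dots,\pi_n)$ of $N$; player $\pi_t$ arrives at time $t$; $\pi_{\prec t}$ is the set of players arriving before time $t$ and $\pi^{-1}(i)$ is the arrival time of $i$. For $S\subseteq N$, $\pi_{|S}$ denotes the players of $S$ in the relative order of $\pi$. Let $C^{t-1}$ be the coalition structure of players arrived before time $t$ ($C^0=\emptyset$). At time $t$, player $\pi_t$ either joins an existing coalition $S\in C^{t-1}$ or forms $\{\pi_t\}$ (choice $S=\emptyset$); decisions are never revised. A distribution policy $\varphi$ assigns to each coalition $S$ (with order $\pi_{|S}$) a split $(\varphi_i(S,\pi_{|S}))_{i\in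 S}$ of $v(S)$. AMC-$h$ policy (threshold $h\ge0$): when player $i$ joins coalition $S$, let $\mathsf{MC}_i=v((\pi_{\prec\pi^{-1}(i)}\cap S)\cup\{i\})-v(\pi_{\prec\pi^{-1}(i)}\cap S)$. If $\mathsf{MC}_i\le h$, all of $\mathsf{MC}_i$ is added to the share of the last player of $S$ who arrived before $i$; if $\mathsf{MC}_i>h$, that previous player additionally receives $h$ and $i$ receives $\mathsf{MC}_i-h$; if $i$ is the first player of her coalition, the "previous player" is $i$ herself (so she receives $v(\{i\})$). Shares already assigned are never reduced. Greedy players: $\pi_t$ chooses $S^*\in\arg\max_{S\in C^{t-1}\cup\{\emptyset\}}\varphi_{\pi_t}(S\cup\{\pi_t\},\pi_{|S\cup\{\pi_t\}})$, i.e. her share immediately after joining (predetermined tie-breaking). $C_g(v,\pi\mid\varphi)$ is the final structure. The competitive ratio over a class is $\alpha=\inf_{v,\pi}\mathsf{SW}(C_g(v,\pi\mid\varphi))/\max_C\mathsf{SW}(C\mid v)$, over $v$ in the class and all arrival orders $\pi$. *)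

theory Defs
  imports Main "HOL-Library.Disjoint_Sets" Complex_Main
begin

text \<open>Players are natural numbers; the player set of an instance is N = set pi,
  where the arrival order pi is a duplicate-free list.\<close>

definition bounded_monotone :: "real \<Rightarrow> real \<Rightarrow> nat set \<Rightarrow> (nat set \<Rightarrow> real) \<Rightarrow> bool" where
  "bounded_monotone mn mx N v \<longleftrightarrow> v {} = 0 \<and>
     (\<forall>S T. S \<noteq> {} \<longrightarrow> S \<subseteq> T \<longrightarrow> T \<subseteq> N \<longrightarrow> mn \<le> v S \<and> v S \<le> v T \<and> v T \<le> mx)"

text \<open>Helper: the list argument holds the coalition members in REVERSE arrival order
  (most recent first).\<close>
fun amc_share_rev :: "(nat set \<Rightarrow> real) \<Rightarrow> real \<Rightarrow> nat list \<Rightarrow> nat \<Rightarrow> real" where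
  "amc_share_rev v h [] = (\<lambda>j. 0)"
| "amc_share_rev v h (i # rs) =
     (if rs = [] then (\<lambda>j. if j = i then v {i} else 0)
      else (let mc = v (set rs \<union> {i}) - v (set rs); p = hd rs; phi = amc_share_rev v h rs in
            if mc \<le> h then phi(p := phi p + mc)
            else phi(p := phi p + h, i := mc - h)))"

definition amc_share :: "(nat set \<Rightarrow> real) \<Rightarrow> real \<Rightarrow> nat list \<Rightarrow> nat \<Rightarrow> real" where
  "amc_share v h xs = amc_share_rev v h (rev xs)"

definition join_value :: "(nat set \<Rightarrow> real) \<Rightarrow> real \<Rightarrow> nat list \<Rightarrow> nat \<Rightarrow> real" where
  "join_value v h c i = amc_share v h (c @ [i]) i"

definition greedy_step :: "(nat set \<Rightarrow> real) \<Rightarrow> real \<Rightarrow> nat list list \<Rightarrow> nat \<Rightarrow> nat list list \<Rightarrow> bool" where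
  "greedy_step v h C i C' \<longleftrightarrow>
     (C' = C @ [[i]] \<and> (\<forall>c\<in>set C. join_value v h c i \<le> join_value v h [] i))
   \<or> (\<exists>k<length C. C' = C[k := C ! k @ [i]] \<and>
        join_value v h [] i \<le> join_value v h (C ! k) i \<and>
        (\<forall>c\<in>set C. join_value v h c i \<le> join_value v h (C ! k) i))"

inductive greedy_run :: "(nat set \<Rightarrow> real) \<Rightarrow> real \<Rightarrow> nat list \<Rightarrow> nat list list \<Rightarrow> bool" where
  "greedy_run v h [] []"
| "greedy_run v h ps C \<Longrightarrow> greedy_step v h C p C' \<Longrightarrow> greedy_run v h (ps @ [p]) C'"

definition SW :: "(nat set \<Rightarrow> real) \<Rightarrow> nat set set \<Rightarrow> real" where
  "SW v P = (\<Sum>S\<in>P. v S)"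

definition structure_of :: "nat list list \<Rightarrow> nat set set" where
  "structure_of C = set ` set C"

definition OPT :: "(nat set \<Rightarrow> real) \<Rightarrow> nat set \<Rightarrow> real" where
  "OPT v N = Max {SW v P | P. partition_on N P}"

definition amc_competitive_ratio :: "real \<Rightarrow> real \<Rightarrow> real \<Rightarrow> real" where
  "amc_competitive_ratio mn mx h = Inf {SW v (structure_of C) / OPT v (set pi) | v pi C.
      pi \<noteq> [] \<and> distinct pi \<and> bounded_monotone mn mx (set pi) v \<and> greedy_run v h pi C}"

end

theory Submission
  imports Defs
begin

lemma share_notin: "j \<notin> set l \<Longrightarrow> amc_share_rev v h l j = 0"
proof (induction l)
  case Nil then show ?case by simp
next
  case (Cons i rs)
  show ?case
  proof (cases "rs = []")
    case True then show ?thesis using Cons by simp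
  next
    case False
    then have "hd rs \<in> set rs" by simp
    then have "hd rs \<noteq> j" using Cons.prems by auto
    then show ?thesis using Cons False by (simp add: Let_def)
  qed
qed

lemma jv_empty: "join_value v h [] i = v {i}"
  by (simp add: join_value_def amc_share_def)

lemma jv_nonempty:
  assumes "c \<noteq> []" "i \<notin> set c"
  shows "join_value v h c i = (if v (set c \<union> {i}) - v (set c) \<le> h then 0 else v (set c \<union> {i}) - v (set c) - h)"
proof -
  have "rev c \<noteq> []" using assms by simp
  moreover have "hd (rev c) \<in> set c" using assms by (metis hd_in_set set_rev \<open>rev c \<noteq> []\<close>)
  then have "i \<noteq> hd (rev c)" using assms by auto
  ultimately show ?thesis using assms
    by (simp add: join_value_def amc_share_def Let_def share_notin)
qed

definition ginv :: "(nat set \<Rightarrow> real) \<Rightarrow> real \<Rightarrow> nat list list \<Rightarrow> nat list \<Rightarrow> bool" where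
  "ginv v h C ps \<longleftrightarrow> distinct (concat C) \<and> set (concat C) = set ps \<and>
    (\<forall>c\<in>set C. (\<exists>a. c = [a]) \<or> (\<exists>a b. c = [a,b] \<and> v {a} + v {b} + h \<le> v {a,b})) \<and>
    (\<forall>i j. [i] \<in> set C \<longrightarrow> [j] \<in> set C \<longrightarrow> i \<noteq> j \<longrightarrow> v {i,j} \<le> v {i} + v {j} + h)"

lemma concat_upd:
  assumes "k < length C"
  shows "set (concat (C[k := x])) = set (concat (take k C)) \<union> set x \<union> set (concat (drop (Suc k) C))"
    "distinct (concat (C[k := x])) \<longleftrightarrow> distinct (concat (take k C) @ x @ concat (drop (Suc k) C))"
    "set (concat C) = set (concat (take k C)) \<union> set (C!k) \<union> set (concat (drop (Suc k) C))"
    "distinct (concat C) \<longleftrightarrow> distinct (concat (take k C) @ C!k @ concat (drop (Suc k) C))"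
proof -
  have e1: "C[k := x] = take k C @ x # drop (Suc k) C" using assms by (rule upd_conv_take_nth_drop)
  have e2: "C = take k C @ C!k # drop (Suc k) C" using assms by (rule id_take_nth_drop)
  show "set (concat (C[k := x])) = set (concat (take k C)) \<union> set x \<union> set (concat (drop (Suc k) C))"
    by (subst e1) auto
  show "distinct (concat (C[k := x])) \<longleftrightarrow> distinct (concat (take k C) @ x @ concat (drop (Suc k) C))"
    by (subst e1) simp
  show "set (concat C) = set (concat (take k C)) \<union> set (C!k) \<union> set (concat (drop (Suc k) C))"
    by (subst e2) auto
  show "distinct (concat C) \<longleftrightarrow> distinct (concat (take k C) @ C!k @ concat (drop (Suc k) C))"
    by (subst e2) simp
qed

lemma run_inv:
  assumes "greedy_run v h ps C" "distinct ps" "set ps \<subseteq> N"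
    "bounded_monotone mn mx N v" "0 < mn" "0 \<le> h" "mx < 3 * mn + 2 * h"
  shows "ginv v h C ps"
  using assms
proof (induction rule: greedy_run.induct)
  case (1 v h)
  then show ?case by (simp add: ginv_def)
next
  case (2 v h ps C p C')
  note stp = 2(2) and mn0 = 2(7) and h0 = 2(8) and mxb = 2(9)
  have IH: "ginv v h C ps" using 2 by simp
  have pN: "p \<in> N" and psN: "set ps \<subseteq> N" using 2 by auto
  have pn: "p \<notin> set ps" using 2 by simp
  have bm: "\<And>S T. S \<noteq> {} \<Longrightarrow> S \<subseteq> T \<Longrightarrow> T \<subseteq> N \<Longrightarrow> mn \<le> v S \<and> v S \<le> v T \<and> v T \<le> mx"
    using 2(6) unfolding bounded_monotone_def by blast
  have vp: "mn \<le> v {p}" using bm[of "{p}" "{p}"] pN by auto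
  have cC: "\<And>c. c \<in> set C \<Longrightarrow> set c \<subseteq> set ps" using IH unfolding ginv_def by auto
  have pc: "\<And>c. c \<in> set C \<Longrightarrow> p \<notin> set c" using cC pn by blast
  from stp show ?case unfolding greedy_step_def
  proof (elim disjE exE conjE)
    assume C': "C' = C @ [[p]]" and cond: "\<forall>c\<in>set C. join_value v h c p \<le> join_value v h [] p"
    have new: "v {i,p} \<le> v {i} + v {p} + h" if "[i] \<in> set C" for i
    proof -
      have ip: "i \<noteq> p" using pc[OF that] by simp
      have "join_value v h [i] p \<le> v {p}" using cond that jv_empty by metis
      moreover have "join_value v h [i] p = (if v {i,p} - v {i} \<le> h then 0 else v {i,p} - v {i} - h)"
        using jv_nonempty[of "[i]" p v h] ip by (simp add: insert_commute)
      ultimately have "v {i,p} - v {i} \<le> v {p} + h" using vp mn0 h0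
        by (auto split: if_splits)
      then show ?thesis by simp
    qed
    show ?thesis unfolding ginv_def C'
    proof (intro conjI)
      show "distinct (concat (C @ [[p]]))" using IH pn unfolding ginv_def by auto
      show "set (concat (C @ [[p]])) = set (ps @ [p])" using IH unfolding ginv_def by auto
      show "\<forall>c\<in>set (C @ [[p]]). (\<exists>a. c = [a]) \<or> (\<exists>a b. c = [a, b] \<and> v {a} + v {b} + h \<le> v {a, b})"
        using IH unfolding ginv_def by auto
      show "\<forall>i j. [i] \<in> set (C @ [[p]]) \<longrightarrow> [j] \<in> set (C @ [[p]]) \<longrightarrow> i \<noteq> j \<longrightarrow> v {i, j} \<le> v {i} + v {j} + h"
      proof (intro allI impI)
        fix i j assume a: "[i] \<in> set (C @ [[p]])" "[j] \<in> set (C @ [[p]])" "i \<noteq> j"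
        consider "[i] \<in> set C" "[j] \<in> set C" | "[i] \<in> set C" "j = p" | "i = p" "[j] \<in> set C"
          using a by auto
        then show "v {i, j} \<le> v {i} + v {j} + h"
        proof cases
          case 1 then show ?thesis using IH a unfolding ginv_def by blast
        next
          case 2 then show ?thesis using new by simp
        next
          case 3 then show ?thesis using new[of j] by (simp add: insert_commute)
        qed
      qed
    qed
  next
    fix k assume k: "k < length C" and C': "C' = C[k := C ! k @ [p]]"
      and cond: "join_value v h [] p \<le> join_value v h (C ! k) p"
    have ck: "C!k \<in> set C" using k by simp
    then consider a where "C!k = [a]" | a b where "C!k = [a,b]" "v {a} + v {b} + h \<le> v {a,b}"
      using IH unfolding ginv_def by blast
    then show ?thesis
    proof cases
      case (2 a b)
      have ab: "{a,b} \<subseteq> N" using cC[OF ck] 2 psN by auto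
      have pC: "p \<notin> set (C!k)" using pc[OF ck] .
      have jv: "join_value v h [a,b] p = (if v {a,b,p} - v {a,b} \<le> h then 0 else v {a,b,p} - v {a,b} - h)"
      proof -
        have jv0: "join_value v h [a,b] p = (if v (set [a,b] \<union> {p}) - v (set [a,b]) \<le> h then 0 else v (set [a,b] \<union> {p}) - v (set [a,b]) - h)"
          by (rule jv_nonempty) (use pC 2 in auto)
        have e1: "set [a,b] \<union> {p} = {a,b,p}" by auto
        have e2: "set [a,b] = {a,b}" by simp
        have e3: "{a,b} \<union> {p} = {a,b,p}" by auto
        show ?thesis using jv0 by (simp only: e1 e2 e3)
      qed
      have j: "v {p} \<le> (if v {a,b,p} - v {a,b} \<le> h then 0 else v {a,b,p} - v {a,b} - h)"
        using cond by (simp only: 2(1) jv jv_empty)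
      then have j2: "v {p} \<le> v {a,b,p} - v {a,b} - h" using vp mn0 by (auto split: if_splits)
      have "v {a,b,p} \<le> mx" using bm[of "{a,b,p}" "{a,b,p}"] ab pN by auto
      moreover have "mn \<le> v {a}" "mn \<le> v {b}" using bm[of "{a}" "{a}"] bm[of "{b}" "{b}"] ab by auto
      ultimately have False using j2 2 vp mn0 h0 mxb by linarith
      then show ?thesis ..
    next
      case (1 a)
      have pa: "p \<noteq> a" using pc[OF ck] 1 by simp
      have jv0: "join_value v h [a] p = (if v (set [a] \<union> {p}) - v (set [a]) \<le> h then 0 else v (set [a] \<union> {p}) - v (set [a]) - h)"
        by (rule jv_nonempty) (use pa in auto)
      have e1: "set [a] \<union> {p} = {a,p}" "set [a] = {a}" "{a} \<union> {p} = {a,p}" by auto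
      have jv: "join_value v h [a] p = (if v {a,p} - v {a} \<le> h then 0 else v {a,p} - v {a} - h)"
        using jv0 by (simp only: e1)
      have j: "v {p} \<le> (if v {a,p} - v {a} \<le> h then 0 else v {a,p} - v {a} - h)"
        using cond by (simp only: 1 jv jv_empty)
      then have newp: "v {a} + v {p} + h \<le> v {a,p}" using vp mn0 by (auto split: if_splits)
      have C'': "C' = C[k := [a,p]]" using C' 1 by simp
      have sub: "set C' \<subseteq> insert [a,p] (set C)" unfolding C'' by (rule set_update_subset_insert)
      show ?thesis unfolding ginv_def
      proof (intro conjI)
        show "distinct (concat C')" using IH pn k 1 unfolding ginv_def C'' concat_upd[OF k] by auto
        show "set (concat C') = set (ps @ [p])" using IH k 1 unfolding ginv_def C'' concat_upd[OF k] by auto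
        show "\<forall>c\<in>set C'. (\<exists>a. c = [a]) \<or> (\<exists>a b. c = [a, b] \<and> v {a} + v {b} + h \<le> v {a, b})"
          using IH sub newp unfolding ginv_def by blast
        show "\<forall>i j. [i] \<in> set C' \<longrightarrow> [j] \<in> set C' \<longrightarrow> i \<noteq> j \<longrightarrow> v {i, j} \<le> v {i} + v {j} + h"
          using IH sub unfolding ginv_def by blast
      qed
    qed
  qed
qed


lemma opt_bound:
  assumes inv: "ginv v h C ps" and bm0: "bounded_monotone mn mx (set ps) v"
    and mn0: "0 < mn" and h0: "0 \<le> h"
    and hb1: "1 \<le> \<beta>" and hb2: "mx \<le> \<beta> * (3*mn)" and hb3: "mx \<le> \<beta> * (2*mn + h/2)"
    and hb4: "\<And>x. 2*mn \<le> x \<Longrightarrow> x + h \<le> \<beta> * x"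
    and P: "partition_on (set ps) P"
  shows "SW v P \<le> \<beta> * SW v (structure_of C)"
proof -
  define N where "N = set ps"
  define Q where "Q = structure_of C"
  have finN: "finite N" unfolding N_def by simp
  have bm: "\<And>S T. S \<noteq> {} \<Longrightarrow> S \<subseteq> T \<Longrightarrow> T \<subseteq> N \<Longrightarrow> mn \<le> v S \<and> v S \<le> v T \<and> v T \<le> mx"
    using bm0 unfolding bounded_monotone_def N_def by blast
  have dc: "distinct (concat C)" and sc: "set (concat C) = N"
    and cs: "\<forall>c\<in>set C. (\<exists>a. c = [a]) \<or> (\<exists>a b. c = [a,b] \<and> v {a} + v {b} + h \<le> v {a,b})"
    and ss: "\<forall>i j. [i] \<in> set C \<longrightarrow> [j] \<in> set C \<longrightarrow> i \<noteq> j \<longrightarrow> v {i,j} \<le> v {i} + v {j} + h"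
    using inv unfolding ginv_def N_def by auto
  have dd: "\<And>c1 c2. c1 \<in> set C \<Longrightarrow> c2 \<in> set C \<Longrightarrow> c1 \<noteq> c2 \<Longrightarrow> set c1 \<inter> set c2 = {}"
    and dcs: "\<And>c. c \<in> set C \<Longrightarrow> distinct c"
    using dc unfolding distinct_concat_iff by blast+
  have Q1: "\<Union>Q = N" using sc unfolding Q_def structure_of_def by simp
  have Q2: "\<And>S1 S2. S1 \<in> Q \<Longrightarrow> S2 \<in> Q \<Longrightarrow> S1 \<noteq> S2 \<Longrightarrow> S1 \<inter> S2 = {}"
    unfolding Q_def structure_of_def using dd by blast
  have Q3: "\<And>S. S \<in> Q \<Longrightarrow> (\<exists>a. S = {a}) \<or> (\<exists>a b. a \<noteq> b \<and> S = {a,b} \<and> v {a} + v {b} + h \<le> v {a,b})"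
  proof -
    fix S assume "S \<in> Q"
    then obtain c where c: "c \<in> set C" "S = set c" unfolding Q_def structure_of_def by blast
    then show "(\<exists>a. S = {a}) \<or> (\<exists>a b. a \<noteq> b \<and> S = {a,b} \<and> v {a} + v {b} + h \<le> v {a,b})"
      using cs dcs[OF c(1)] by fastforce
  qed
  have Qsing: "\<And>i. {i} \<in> Q \<Longrightarrow> [i] \<in> set C"
  proof -
    fix i assume "{i} \<in> Q"
    then obtain c where c: "c \<in> set C" "{i} = set c" unfolding Q_def structure_of_def by blast
    from cs c(1) consider a where "c = [a]" | a b where "c = [a,b]" by blast
    then show "[i] \<in> set C"
    proof cases
      case 1 then show ?thesis using c by simp
    next
      case 2 then have "a \<noteq> b" using dcs[OF c(1)] by simp
      have "{i} = {a,b}" using c 2 by simp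
      then have False using \<open>a \<noteq> b\<close> by blast
      then show ?thesis ..
    qed
  qed
  have Q4: "\<And>i j. {i} \<in> Q \<Longrightarrow> {j} \<in> Q \<Longrightarrow> i \<noteq> j \<Longrightarrow> v {i,j} \<le> v {i} + v {j} + h"
    using ss Qsing by blast
  have Qne: "{} \<notin> Q" using Q3 by blast
  have partQ: "partition_on N Q"
    unfolding partition_on_def disjoint_def using Q1 Q2 Qne by blast
  define G where "G i = (THE S. S \<in> Q \<and> i \<in> S)" for i
  have G_eq: "\<And>S i. S \<in> Q \<Longrightarrow> i \<in> S \<Longrightarrow> G i = S"
    unfolding G_def by (rule the_equality) (use Q2 in blast)+
  define w where "w i = v {i} + (v (G i) - (\<Sum>j\<in>G i. v {j})) / card (G i)" for i
  have vi: "\<And>i. i \<in> N \<Longrightarrow> mn \<le> v {i}" using bm by blast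
  have sumQ: "\<And>S. S \<in> Q \<Longrightarrow> (\<Sum>i\<in>S. w i) = v S"
  proof -
    fix S assume S: "S \<in> Q"
    from Q3[OF S] show "(\<Sum>i\<in>S. w i) = v S"
    proof (elim disjE exE conjE)
      fix a assume a: "S = {a}"
      then show ?thesis using G_eq[OF S] by (simp add: w_def)
    next
      fix a b assume ab: "a \<noteq> b" "S = {a,b}"
      have "G a = {a,b}" "G b = {a,b}" using G_eq[OF S] ab by auto
      then show ?thesis using ab by (simp add: w_def field_simps)
    qed
  qed
  have wcase: "\<And>i. i \<in> N \<Longrightarrow> ({i} \<in> Q \<and> w i = v {i}) \<or> (mn + h/2 \<le> w i \<and> v {i} \<le> w i \<and> {i} \<notin> Q)"
  proof -
    fix i assume i: "i \<in> N"
    then obtain S where S: "S \<in> Q" "i \<in> S" using Q1 by blast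
    from Q3[OF S(1)] show "({i} \<in> Q \<and> w i = v {i}) \<or> (mn + h/2 \<le> w i \<and> v {i} \<le> w i \<and> {i} \<notin> Q)"
    proof (elim disjE exE conjE)
      fix a assume a: "S = {a}"
      then have "S = {i}" using S by simp
      then show ?thesis using G_eq[OF S] S by (simp add: w_def)
    next
      fix a b assume ab: "a \<noteq> b" "S = {a,b}" "v {a} + v {b} + h \<le> v {a,b}"
      have G: "G i = {a,b}" using G_eq[OF S] ab by auto
      have nsing: "{i} \<notin> Q"
      proof
        assume iQ: "{i} \<in> Q"
        have "{i} \<noteq> S" using ab by auto
        then have "{i} \<inter> S = {}" using Q2[OF iQ S(1)] by blast
        then show False using S(2) by blast
      qed
      have "w i = v {i} + (v {a,b} - v {a} - v {b}) / 2" using G ab by (simp add: w_def)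
      moreover have "mn \<le> v {i}" using vi i by blast
      ultimately have "mn + h/2 \<le> w i" "v {i} \<le> w i" using ab(3) h0 by (simp_all add: field_simps)
      then show ?thesis using nsing by blast
    qed
  qed
  have wmn: "mn \<le> w i" if i: "i \<in> N" for i
    using wcase[OF i] vi[OF i] h0 by (elim disjE conjE) linarith+
  have keyT: "\<And>T. T \<in> P \<Longrightarrow> v T \<le> \<beta> * (\<Sum>i\<in>T. w i)"
  proof -
    fix T assume TP: "T \<in> P"
    have TN: "T \<subseteq> N" and Tne: "T \<noteq> {}" using P TP unfolding partition_on_def N_def by blast+
    have finT: "finite T" using TN finN finite_subset by blast
    have vT: "v T \<le> mx" using bm[OF Tne _ TN] by blast
    have sge: "real (card T) * mn \<le> (\<Sum>i\<in>T. w i)"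
      using sum_bounded_below[of T mn w] wmn TN by auto
    have cT: "card T \<ge> 1" using finT Tne by (simp add: Suc_le_eq card_gt_0_iff)
    consider "card T = 1" | "card T = 2" | "card T \<ge> 3" using cT by linarith
    then show "v T \<le> \<beta> * (\<Sum>i\<in>T. w i)"
    proof cases
      case 1
      then obtain i where Ti: "T = {i}" by (auto simp: card_Suc_eq)
      then have "v T \<le> w i" using wcase[of i] TN by auto
      moreover have "0 \<le> w i" using wmn[of i] TN Ti mn0 by auto
      then have "1 * w i \<le> \<beta> * w i" by (rule mult_right_mono[OF hb1])
      ultimately show ?thesis using Ti by simp
    next
      case 2
      then obtain i j where Tij: "T = {i,j}" "i \<noteq> j" by (auto simp: card_2_iff)
      have iN: "i \<in> N" "j \<in> N" using TN Tij by auto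
      have sT: "(\<Sum>k\<in>T. w k) = w i + w j" using Tij by simp
      show ?thesis
      proof (cases "T \<in> Q")
        case True
        then have "(\<Sum>k\<in>T. w k) = v T" using sumQ by blast
        moreover have "0 \<le> v T" using bm[OF Tne _ TN] mn0 by force
        then have "1 * v T \<le> \<beta> * v T" by (rule mult_right_mono[OF hb1])
        ultimately show ?thesis by simp
      next
        case False
        show ?thesis
        proof (cases "{i} \<in> Q \<and> {j} \<in> Q")
          case True
          then have wij: "w i = v {i}" "w j = v {j}" using wcase iN by blast+
          have "v T \<le> v {i} + v {j} + h" using Q4 True Tij by blast
          also have "\<dots> \<le> \<beta> * (v {i} + v {j})" using hb4 vi iN by (smt (verit))
          finally show ?thesis using sT wij by simp
        next
          case False
          have "2*mn + h/2 \<le> w i + w j"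
            using wcase[OF iN(1)] wcase[OF iN(2)] wmn[OF iN(1)] wmn[OF iN(2)] False by (elim disjE conjE) linarith+
          then have "\<beta> * (2*mn + h/2) \<le> \<beta> * (w i + w j)" using hb1 by (simp add: mult_left_mono)
          then show ?thesis using hb3 vT unfolding sT by linarith
        qed
      qed
    next
      case 3
      then have "3 \<le> real (card T)" by simp
      then have "3 * mn \<le> real (card T) * mn" using mn0 by (simp add: mult_right_mono)
      then have "3 * mn \<le> (\<Sum>i\<in>T. w i)" using sge by linarith
      then have "\<beta> * (3*mn) \<le> \<beta> * (\<Sum>i\<in>T. w i)" using hb1 by (simp add: mult_left_mono)
      then show ?thesis using hb2 vT by linarith
    qed
  qed
  have "SW v P = (\<Sum>T\<in>P. v T)" by (simp add: SW_def)
  also have "\<dots> \<le> (\<Sum>T\<in>P. \<beta> * (\<Sum>i\<in>T. w i))" by (rule sum_mono) (rule keyT)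
  also have "\<dots> = \<beta> * (\<Sum>i\<in>N. w i)"
    using sum.partition[OF finN, of P w] P unfolding N_def by (simp add: sum_distrib_left)
  also have "(\<Sum>i\<in>N. w i) = (\<Sum>S\<in>Q. \<Sum>i\<in>S. w i)" using sum.partition[OF finN partQ] .
  also have "\<dots> = (\<Sum>S\<in>Q. v S)" using sumQ by simp
  also have "\<dots> = SW v (structure_of C)" by (simp add: SW_def Q_def)
  finally show ?thesis .
qed


lemma arith_facts:
  fixes mn mx s h \<beta> \<alpha> :: real
  assumes mn0: "0 < mn" and a2: "2 * mn \<le> mx" and a3: "mx < 3 * mn"
  and s_def: "s = sqrt (mn * (mn + 4 * mx))"
  and h_def: "h = s - 3 * mn"
  and b_def: "\<beta> = (2*mn + h) / (2*mn)"
  and a_def: "\<alpha> = (mn + s) / (2 * mx)"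
  shows "0 \<le> h" "h < mn" "2*mn + h \<le> mx" "1 \<le> \<beta>" "mx \<le> \<beta> * (3*mn)" "mx \<le> \<beta> * (2*mn + h/2)"
    "\<And>x. 2*mn \<le> x \<Longrightarrow> x + h \<le> \<beta> * x" "\<alpha> * \<beta> = 1" "0 < \<alpha>"
proof -
  have mx0: "0 < mx" using mn0 a2 by linarith
  have s0: "0 \<le> s" unfolding s_def using mn0 mx0 by simp
  have s2: "s^2 = mn * (mn + 4 * mx)" unfolding s_def using mn0 mx0 by simp
  have s2': "s^2 = mn*mn + 4*(mn*mx)" using s2 by (simp add: algebra_simps)
  have A: "2*(mn*mn) \<le> mn * mx" using mult_left_mono[OF a2, of mn] mn0 by (simp add: algebra_simps)
  have B: "mn * mx < 3*(mn*mn)" using mult_strict_left_mono[OF a3 mn0] by (simp add: algebra_simps)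
  have C: "2*(mn*mx) \<le> mx*mx" using mult_right_mono[OF a2, of mx] mx0 by (simp add: algebra_simps)
  have q1: "(3*mn)^2 = 9*(mn*mn)" "(4*mn)^2 = 16*(mn*mn)" "(mx+mn)^2 = mx*mx + 2*(mn*mx) + mn*mn"
    by (simp_all add: power2_eq_square algebra_simps)
  have "(3*mn)^2 \<le> s^2" unfolding q1 s2' using A by linarith
  then have s3: "3*mn \<le> s" using s0 by (rule power2_le_imp_le)
  have "s^2 < (4*mn)^2" unfolding q1 s2' using B mult_pos_pos[OF mn0 mn0] by linarith
  then have s4: "s < 4*mn" using power2_less_imp_less[of s "4*mn"] mn0 by simp
  have "s^2 \<le> (mx + mn)^2" unfolding q1 s2' using C by linarith
  then have s5: "s \<le> mx + mn" using power2_le_imp_le[of s "mx+mn"] mx0 mn0 by simp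
  show h0: "0 \<le> h" unfolding h_def using s3 by simp
  show hm: "h < mn" unfolding h_def using s4 by simp
  show "2*mn + h \<le> mx" unfolding h_def using s5 by simp
  show "1 \<le> \<beta>" unfolding b_def using h0 mn0 by simp
  have key: "4*mn*mx = (2*mn + h) * (4*mn + h)"
  proof -
    have "(2*mn + h) * (4*mn + h) = (s - mn) * (s + mn)" unfolding h_def by (simp add: algebra_simps)
    also have "\<dots> = s^2 - mn^2" by (simp add: power2_eq_square algebra_simps)
    also have "\<dots> = 4*mn*mx" unfolding s2 by (simp add: power2_eq_square algebra_simps)
    finally show ?thesis by simp
  qed
  have bb: "\<beta> * (2*mn) = 2*mn + h" unfolding b_def using mn0 by simp
  have "(2*mn + h) * (4*mn + h) \<le> (2*mn + h) * (6*mn)"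
    using hm h0 mn0 by (intro mult_left_mono) auto
  also have "\<dots> = 4*mn * (\<beta> * (3*mn))"
  proof -
    have "4*mn * (\<beta> * (3*mn)) = 6*mn * (\<beta> * (2*mn))" by (simp add: algebra_simps)
    then show ?thesis unfolding bb by (simp add: algebra_simps)
  qed
  finally have "4*mn*mx \<le> 4*mn * (\<beta> * (3*mn))" unfolding key .
  then show "mx \<le> \<beta> * (3*mn)" using mn0 by simp
  have "(2*mn + h) * (4*mn + h) = 4*mn * (\<beta> * (2*mn + h/2))"
  proof -
    have "4*mn * (\<beta> * (2*mn + h/2)) = (\<beta> * (2*mn)) * (4*mn + h)" by (simp add: algebra_simps)
    then show ?thesis using bb by simp
  qed
  then show "mx \<le> \<beta> * (2*mn + h/2)" using key mn0 by simp
  show "x + h \<le> \<beta> * x" if x: "2*mn \<le> x" for x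
  proof -
    have "h * (2*mn) \<le> h * x" using x h0 by (intro mult_left_mono) auto
    have b1: "\<beta> = 1 + h / (2*mn)" unfolding b_def using mn0 by (simp add: add_divide_distrib)
    have "\<beta> * x = x + h * x / (2*mn)" unfolding b1 by (simp add: distrib_right)
    moreover have "h \<le> h * x / (2*mn)" using \<open>h * (2*mn) \<le> h * x\<close> mn0 by (simp add: pos_le_divide_eq)
    ultimately show ?thesis by simp
  qed
  have e1: "2*mn + h = s - mn" unfolding h_def by simp
  have e2: "(mn + s) * (s - mn) = 4*mn*mx" using s2 by (simp add: power2_eq_square algebra_simps)
  have "\<alpha> * \<beta> = ((mn + s) * (s - mn)) / ((2*mx) * (2*mn))"
    unfolding a_def b_def e1 by simp
  also have "\<dots> = (4*mn*mx) / (4*mn*mx)" unfolding e2 by (simp add: algebra_simps)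
  also have "\<dots> = 1" using mn0 mx0 by simp
  finally show "\<alpha> * \<beta> = 1" .
  show "0 < \<alpha>" unfolding a_def using mn0 mx0 s0 by simp
qed


lemma finite_opt: "finite N \<Longrightarrow> finite {SW v P | P. partition_on N P}"
proof -
  assume "finite N"
  then have "finite (SW v ` {P. partition_on N P})" using finitely_many_partition_on by blast
  moreover have "{SW v P | P. partition_on N P} = SW v ` {P. partition_on N P}" by blast
  ultimately show ?thesis by simp
qed

lemma opt_ge: "finite N \<Longrightarrow> partition_on N P \<Longrightarrow> SW v P \<le> OPT v N"
  unfolding OPT_def by (rule Max_ge) (auto simp: finite_opt)

lemma opt_le: "finite N \<Longrightarrow> N \<noteq> {} \<Longrightarrow> (\<And>P. partition_on N P \<Longrightarrow> SW v P \<le> B) \<Longrightarrow> OPT v N \<le> B"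
  unfolding OPT_def using partition_on_space[of N]
  by (subst Max_le_iff) (auto simp: finite_opt)


theorem theorem5:
  fixes mn mx :: real
  assumes "0 < mn" and "2 * mn \<le> mx" and "mx < 3 * mn"
  shows "amc_competitive_ratio mn mx (sqrt (mn * (mn + 4 * mx)) - 3 * mn)
           = (mn + sqrt (mn * (mn + 4 * mx))) / (2 * mx)"
proof -
  define s where "s = sqrt (mn * (mn + 4 * mx))"
  define h where "h = s - 3 * mn"
  define \<beta> where "\<beta> = (2*mn + h) / (2*mn)"
  define \<alpha> where "\<alpha> = (mn + s) / (2 * mx)"
  note af = arith_facts[OF assms s_def h_def \<beta>_def \<alpha>_def]
  have mn0: "0 < mn" using assms by simp
  have h0: "0 \<le> h" and hmx: "2*mn + h \<le> mx" and ab: "\<alpha> * \<beta> = 1" and a0: "0 < \<alpha>"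
    using af by auto
  define R where "R = {SW v (structure_of C) / OPT v (set pi) | v pi C.
      pi \<noteq> [] \<and> distinct pi \<and> bounded_monotone mn mx (set pi) v \<and> greedy_run v h pi C}"
  have lower: "\<alpha> \<le> r" if "r \<in> R" for r
  proof -
    obtain v ps C where r: "r = SW v (structure_of C) / OPT v (set ps)"
      and ps: "ps \<noteq> []" "distinct ps" and bm0: "bounded_monotone mn mx (set ps) v"
      and run: "greedy_run v h ps C"
      using \<open>r \<in> R\<close> unfolding R_def by blast
    have inv: "ginv v h C ps"
      by (rule run_inv[OF run ps(2) order_refl bm0 mn0 h0]) (use assms h0 in linarith)
    have finN: "finite (set ps)" by simp
    have Nne: "set ps \<noteq> {}" using ps by simp
    have le: "OPT v (set ps) \<le> \<beta> * SW v (structure_of C)"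
      by (rule opt_le[OF finN Nne], rule opt_bound[OF inv bm0 mn0 h0]) (use af in auto)
    have "SW v {set ps} \<le> OPT v (set ps)" by (rule opt_ge[OF finN partition_on_space[OF Nne]])
    moreover have "mn \<le> v (set ps)" using bm0 Nne unfolding bounded_monotone_def by blast
    ultimately have opos: "0 < OPT v (set ps)" using mn0 by (simp add: SW_def)
    have "\<alpha> * OPT v (set ps) \<le> \<alpha> * (\<beta> * SW v (structure_of C))"
      using le a0 by (simp add: mult_left_mono)
    also have "\<dots> = SW v (structure_of C)" using ab by (simp add: mult.assoc[symmetric])
    finally show ?thesis unfolding r using opos by (simp add: pos_le_divide_eq)
  qed
  define v0 where "v0 S = (if S = {} then 0 else if S = {0::nat,1} then 2*mn + h else mn)" for S
  define C0 where "C0 = [[0::nat],[1]]"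
  have bm0: "bounded_monotone mn mx (set [0::nat,1]) v0"
    unfolding bounded_monotone_def
  proof (intro conjI allI impI)
    show "v0 {} = 0" by (simp add: v0_def)
    fix S T :: "nat set" assume a: "S \<noteq> {}" "S \<subseteq> T" "T \<subseteq> set [0,1]"
    have T: "T \<noteq> {}" using a by blast
    show "mn \<le> v0 S" using a h0 mn0 by (simp add: v0_def)
    show "v0 T \<le> mx" using T hmx assms by (simp add: v0_def)
    show "v0 S \<le> v0 T"
    proof (cases "T = {0,1}")
      case True then show ?thesis using a h0 mn0 by (simp add: v0_def)
    next
      case False
      then have "S \<noteq> {0,1}" using a by auto
      then show ?thesis using a False T by (simp add: v0_def)
    qed
  qed
  have run0: "greedy_run v0 h [0,1] C0"
  proof -
    have r1: "greedy_run v0 h ([] @ [0]) [[0]]"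
      by (rule greedy_run.intros(2)[OF greedy_run.intros(1)]) (simp add: greedy_step_def)
    have j1: "join_value v0 h [0] 1 = mn"
    proof -
      have "join_value v0 h [0] 1 = (if v0 (set [0] \<union> {1}) - v0 (set [0]) \<le> h then 0 else v0 (set [0] \<union> {1}) - v0 (set [0]) - h)"
        by (rule jv_nonempty) auto
      also have "\<dots> = mn" using mn0 by (simp add: v0_def insert_commute)
      finally show ?thesis .
    qed
    have "greedy_step v0 h [[0]] 1 C0"
      unfolding greedy_step_def C0_def using j1 by (simp add: jv_empty v0_def)
    then have "greedy_run v0 h (([] @ [0]) @ [1]) C0" by (rule greedy_run.intros(2)[OF r1])
    then show ?thesis by simp
  qed
  define r0 where "r0 = SW v0 (structure_of C0) / OPT v0 (set [0::nat,1])"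
  have r0R: "r0 \<in> R" unfolding R_def r0_def mem_Collect_eq
    by (rule exI[of _ v0], rule exI[of _ "[0::nat,1]"], rule exI[of _ C0]) (use bm0 run0 in simp)
  have sw0: "SW v0 (structure_of C0) = 2*mn"
    unfolding SW_def structure_of_def C0_def by (simp add: v0_def)
  have "SW v0 {{0,1}} \<le> OPT v0 (set [0::nat,1])"
    by (rule opt_ge) (auto intro: partition_on_space)
  then have o0: "2*mn + h \<le> OPT v0 (set [0::nat,1])" by (simp add: SW_def v0_def)
  have "r0 \<le> 2*mn / (2*mn + h)" unfolding r0_def sw0
    using o0 mn0 h0 by (intro divide_left_mono) auto
  also have "2*mn / (2*mn + h) = \<alpha>"
  proof -
    have "\<beta> \<noteq> 0" using ab by auto
    then have "\<alpha> = 1 / \<beta>" using ab by (simp add: field_simps)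
    then show ?thesis unfolding \<beta>_def by simp
  qed
  finally have r0a: "r0 \<le> \<alpha>" .
  have bdd: "bdd_below R" unfolding bdd_below_def using lower by blast
  have "Inf R = \<alpha>"
  proof (rule order.antisym)
    show "Inf R \<le> \<alpha>" using cInf_lower[OF r0R bdd] r0a by linarith
    show "\<alpha> \<le> Inf R" using r0R lower by (intro cInf_greatest) auto
  qed
  then show ?thesis unfolding amc_competitive_ratio_def R_def h_def s_def \<alpha>_def by simp
qed

end
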